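(* Let $P$ be a group property preserved under quotients, let $k\ge2$ be an integer and $\rho:\mathbb{N}\to[0,1]$. Then for every $l$ divisible by $3$, $$\mathbb{P}(\Gamma\in\mathcal{B}(k,l,\rho)\text{ has }P)\ge\mathbb{P}(\Gamma'\in\mathcal{B}'(k,l,\rho)\text{ has }P).$$ In particular, if a random group in $\mathcal{B}'(k,l,\rho)$ has $P$ asymptotically almost surely (as $l\to\infty$ through multiples of $3$), then so does a random group in $\mathcal{B}(k,l,\rho)$.
   Context: Gromov binomial model $\mathcal{B}(k,l,\rho)$: $\Gamma=\langle\mathcal{A}\mid\mathcal{R}\rangle$ with $|\mathcal{A}|=k$, where each cyclically reduced word of length $l$ in $\mathcal{A}\cup\mathcal{A}^{-1}$ is put in $\mathcal{R}$ independently with probability $\rho(l)$. For $l$ divisible by $3$, $W'_{l/3}$ is the set of reduced words of length $l/3$ in $\mathcal{A}\cup\mathcal{A}^{-1}$ whose first and last letters lie in $\mathcal{A}$, and $W'_l$ is the set of words of length $l$ that are concatenations of three words of $W'_{l/3}$. Model $\mathcal{B}'(k,l,\rho)$: $\Gamma'=\langle\mathcal{A}\mid\mathcal{R}\rangle$ with $|\mathcal{A}|=k$, where each word of $W'_l$ is put in $\mathcal{R}$ independently with probability $\rho(l)$. A property is preserved under quotients if whenever a group has it, so does every quotient. *)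

theory Defs
  imports "HOL-Algebra.Group" Complex_Main
begin

text \<open>Letters over the alphabet A = {0..<k}: (False, a) is the generator a,
  (True, a) is its inverse.\<close>
type_synonym letter = "bool \<times> nat"

definition inv_letter :: "letter \<Rightarrow> letter" where
  "inv_letter x = (\<not> fst x, snd x)"

definition alph :: "nat \<Rightarrow> letter set" where
  "alph k = {x. snd x < k}"

definition reduced :: "letter list \<Rightarrow> bool" where
  "reduced w = (\<forall>i. Suc i < length w \<longrightarrow> w ! Suc i \<noteq> inv_letter (w ! i))"

definition cyc_reduced :: "letter list \<Rightarrow> bool" where
  "cyc_reduced w = (reduced w \<and> (w \<noteq> [] \<longrightarrow> last w \<noteq> inv_letter (hd w)))"

definition CR_words :: "nat \<Rightarrow> nat \<Rightarrow> letter list set" where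
  "CR_words k l = {w. set w \<subseteq> alph k \<and> length w = l \<and> cyc_reduced w}"

definition W'_short :: "nat \<Rightarrow> nat \<Rightarrow> letter list set" where
  "W'_short k m = {w. set w \<subseteq> alph k \<and> length w = m \<and> reduced w \<and>
                      (w \<noteq> [] \<longrightarrow> \<not> fst (hd w) \<and> \<not> fst (last w))}"

definition W'_long :: "nat \<Rightarrow> nat \<Rightarrow> letter list set" where
  "W'_long k l = {u @ v @ x | u v x. u \<in> W'_short k (l div 3) \<and> v \<in> W'_short k (l div 3)
                                    \<and> x \<in> W'_short k (l div 3)}"

inductive pres_step :: "nat \<Rightarrow> letter list set \<Rightarrow> letter list \<Rightarrow> letter list \<Rightarrow> bool"
  for k R where
  free: "\<lbrakk>set u \<subseteq> alph k; set v \<subseteq> alph k; x \<in> alph k\<rbrakk>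
         \<Longrightarrow> pres_step k R (u @ v) (u @ [x, inv_letter x] @ v)"
| rel: "\<lbrakk>set u \<subseteq> alph k; set v \<subseteq> alph k; r \<in> R\<rbrakk>
         \<Longrightarrow> pres_step k R (u @ v) (u @ r @ v)"

definition pres_rel :: "nat \<Rightarrow> letter list set \<Rightarrow> (letter list \<times> letter list) set" where
  "pres_rel k R = {(u, v). set u \<subseteq> alph k \<and> set v \<subseteq> alph k \<and> equivclp (pres_step k R) u v}"

definition pres_group :: "nat \<Rightarrow> letter list set \<Rightarrow> letter list set monoid" where
  "pres_group k R =
     \<lparr> carrier = lists (alph k) // pres_rel k R,
       monoid.mult = (\<lambda>A B. \<Union>a\<in>A. \<Union>b\<in>B. pres_rel k R `` {a @ b}),
       one = pres_rel k R `` {[]} \<rparr>"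

text \<open>Probability that a binomial random subset of S (each element independently
  with probability p) satisfies Q.\<close>
definition binom_prob :: "'a set \<Rightarrow> real \<Rightarrow> ('a set \<Rightarrow> bool) \<Rightarrow> real" where
  "binom_prob S p Q = (\<Sum>R \<in> {R. R \<subseteq> S \<and> Q R}. p ^ card R * (1 - p) ^ (card S - card R))"

definition prob_B :: "nat \<Rightarrow> nat \<Rightarrow> (nat \<Rightarrow> real) \<Rightarrow> (letter list set monoid \<Rightarrow> bool) \<Rightarrow> real" where
  "prob_B k l \<rho> P = binom_prob (CR_words k l) (\<rho> l) (\<lambda>R. P (pres_group k R))"

definition prob_B' :: "nat \<Rightarrow> nat \<Rightarrow> (nat \<Rightarrow> real) \<Rightarrow> (letter list set monoid \<Rightarrow> bool) \<Rightarrow> real" where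
  "prob_B' k l \<rho> P = binom_prob (W'_long k l) (\<rho> l) (\<lambda>R. P (pres_group k R))"

definition preserved_under_quotients :: "(letter list set monoid \<Rightarrow> bool) \<Rightarrow> bool" where
  "preserved_under_quotients P =
    (\<forall>G H. group G \<and> group H \<and> P G \<and> (\<exists>h \<in> hom G H. h ` carrier G = carrier H) \<longrightarrow> P H)"

end

theory Submission
  imports Defs
begin


lemma step_app_right:
  assumes "pres_step k R u v" "set w \<subseteq> alph k"
  shows "pres_step k R (u @ w) (v @ w)"
  using assms
proof (induction rule: pres_step.induct)
  case (free u v x)
  then show ?case using pres_step.free[of u k "v @ w" x R] by simp
next
  case (rel u v r)
  then show ?case using pres_step.rel[of u k "v @ w" r R] by simp
qed

lemma step_app_left:
  assumes "pres_step k R u v" "set w \<subseteq> alph k"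
  shows "pres_step k R (w @ u) (w @ v)"
  using assms
proof (induction rule: pres_step.induct)
  case (free u v x)
  then show ?case using pres_step.free[of "w @ u" k v x R] by simp
next
  case (rel u v r)
  then show ?case using pres_step.rel[of "w @ u" k v r R] by simp
qed

lemma eqv_app_right:
  assumes "equivclp (pres_step k R) u v" "set w \<subseteq> alph k"
  shows "equivclp (pres_step k R) (u @ w) (v @ w)"
  using assms(1)
proof (induction rule: equivclp_induct)
  case base then show ?case by simp
next
  case (step y z)
  then show ?case using step_app_right[OF _ assms(2)]
    by (meson equivclp_into_equivclp)
qed

lemma eqv_app_left:
  assumes "equivclp (pres_step k R) u v" "set w \<subseteq> alph k"
  shows "equivclp (pres_step k R) (w @ u) (w @ v)"
  using assms(1)
proof (induction rule: equivclp_induct)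
  case base then show ?case by simp
next
  case (step y z)
  then show ?case using step_app_left[OF _ assms(2)]
    by (meson equivclp_into_equivclp)
qed

lemma rel_app:
  assumes "(a, a') \<in> pres_rel k R" "(b, b') \<in> pres_rel k R"
  shows "(a @ b, a' @ b') \<in> pres_rel k R"
proof -
  have 1: "equivclp (pres_step k R) (a @ b) (a' @ b)"
    using assms eqv_app_right unfolding pres_rel_def by blast
  have 2: "equivclp (pres_step k R) (a' @ b) (a' @ b')"
    using assms eqv_app_left unfolding pres_rel_def by blast
  show ?thesis using assms equivclp_trans[OF 1 2] unfolding pres_rel_def by auto
qed

lemma equiv_rel: "equiv (lists (alph k)) (pres_rel k R)"
  unfolding equiv_def refl_on_def sym_def trans_def pres_rel_def
  by (auto intro: equivclp_sym equivclp_trans)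

lemma rel_mono:
  assumes "R1 \<subseteq> R2"
  shows "pres_rel k R1 \<subseteq> pres_rel k R2"
proof -
  have "equivclp (pres_step k R2) u v" if "equivclp (pres_step k R1) u v" for u v
    using that
  proof (induction rule: equivclp_induct)
    case base then show ?case by simp
  next
    case (step y z)
    have "pres_step k R2 a b" if "pres_step k R1 a b" for a b
      using that assms by (induction rule: pres_step.induct) (blast intro: pres_step.intros)+
    then show ?case using step by (meson equivclp_into_equivclp)
  qed
  then show ?thesis unfolding pres_rel_def by auto
qed

lemma inv_cancel:
  assumes "set w \<subseteq> alph k"
  shows "equivclp (pres_step k R) [] (w @ rev (map inv_letter w))"
  using assms
proof (induction w)
  case Nil then show ?case by simp
next
  case (Cons x w)
  have x: "x \<in> alph k" and w: "set w \<subseteq> alph k" using Cons.prems by auto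
  have 1: "equivclp (pres_step k R) [] [x, inv_letter x]"
    using pres_step.free[of "[]" k "[]" x R] x by auto
  have ix: "inv_letter x \<in> alph k" using x by (simp add: alph_def inv_letter_def)
  have 2: "equivclp (pres_step k R) ([] @ [inv_letter x]) ((w @ rev (map inv_letter w)) @ [inv_letter x])"
    by (rule eqv_app_right[OF Cons.IH[OF w]]) (use ix in simp)
  have "equivclp (pres_step k R) ([x] @ [] @ [inv_letter x]) ([x] @ (w @ rev (map inv_letter w)) @ [inv_letter x])"
    using eqv_app_left[OF 2, of "[x]"] x by simp
  then show ?case using equivclp_trans[OF 1] by simp
qed

lemma mult_class:
  assumes "set a \<subseteq> alph k" "set b \<subseteq> alph k"
  shows "monoid.mult (pres_group k R) (pres_rel k R `` {a}) (pres_rel k R `` {b}) = pres_rel k R `` {a @ b}"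
proof -
  let ?E = "pres_rel k R"
  have ra: "(a, a) \<in> ?E" and rb: "(b, b) \<in> ?E" using assms unfolding pres_rel_def by auto
  have "?E `` {a' @ b'} \<subseteq> ?E `` {a @ b}" if "a' \<in> ?E `` {a}" "b' \<in> ?E `` {b}" for a' b'
  proof -
    have "(a @ b, a' @ b') \<in> ?E" using rel_app that by blast
    then show ?thesis using equiv_rel[of k R] unfolding equiv_def trans_def by blast
  qed
  then show ?thesis unfolding pres_group_def using ra rb by auto
qed

lemma mult_class':
  assumes "a \<in> lists (alph k)" "b \<in> lists (alph k)"
  shows "monoid.mult (pres_group k R) (pres_rel k R `` {a}) (pres_rel k R `` {b}) = pres_rel k R `` {a @ b}"
  using mult_class assms by (simp add: in_lists_conv_set subset_iff)

lemma pres_group_group: "group (pres_group k R)"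
proof -
  let ?E = "pres_rel k R"
  let ?G = "pres_group k R"
  have carr: "carrier ?G = lists (alph k) // ?E" by (simp add: pres_group_def)
  have one: "one ?G = ?E `` {[]}" by (simp add: pres_group_def)
  show ?thesis
  proof (rule groupI)
    fix x y assume "x \<in> carrier ?G" "y \<in> carrier ?G"
    then obtain a b where "a \<in> lists (alph k)" "b \<in> lists (alph k)" "x = ?E `` {a}" "y = ?E `` {b}"
      unfolding carr by (auto elim!: quotientE)
    then show "x \<otimes>\<^bsub>?G\<^esub> y \<in> carrier ?G" using carr
      by (simp add: mult_class' quotientI)
  next
    show "\<one>\<^bsub>?G\<^esub> \<in> carrier ?G" unfolding carr one by (auto intro: quotientI)
  next
    fix x y z assume "x \<in> carrier ?G" "y \<in> carrier ?G" "z \<in> carrier ?G"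
    then obtain a b c where "a \<in> lists (alph k)" "b \<in> lists (alph k)" "c \<in> lists (alph k)"
       "x = ?E `` {a}" "y = ?E `` {b}" "z = ?E `` {c}"
      unfolding carr by (auto elim!: quotientE)
    then show "x \<otimes>\<^bsub>?G\<^esub> y \<otimes>\<^bsub>?G\<^esub> z = x \<otimes>\<^bsub>?G\<^esub> (y \<otimes>\<^bsub>?G\<^esub> z)"
      by (simp add: mult_class')
  next
    fix x assume "x \<in> carrier ?G"
    then obtain a where "a \<in> lists (alph k)" "x = ?E `` {a}"
      unfolding carr by (auto elim!: quotientE)
    then show "\<one>\<^bsub>?G\<^esub> \<otimes>\<^bsub>?G\<^esub> x = x" unfolding one
      using mult_class[of "[]" k a R] by auto
  next
    fix x assume "x \<in> carrier ?G"
    then obtain a where a: "a \<in> lists (alph k)" "x = ?E `` {a}"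
      unfolding carr by (auto elim!: quotientE)
    define b where "b = rev (map inv_letter a)"
    have b: "b \<in> lists (alph k)" using a(1) by (auto simp: b_def alph_def inv_letter_def)
    have "rev (map inv_letter b) = a" by (simp add: b_def rev_map inv_letter_def comp_def)
    then have "equivclp (pres_step k R) [] (b @ a)" using inv_cancel[of b k R] b by auto
    then have "([], b @ a) \<in> ?E" using a b unfolding pres_rel_def by auto
    then have "?E `` {b @ a} = ?E `` {[]}"
      using equiv_rel[of k R] by (metis equiv_class_eq)
    then have "?E `` {b} \<otimes>\<^bsub>?G\<^esub> x = \<one>\<^bsub>?G\<^esub>"
      using a b mult_class[of b k a R] one by auto
    moreover have "?E `` {b} \<in> carrier ?G" using b carr by (auto intro: quotientI)
    ultimately show "\<exists>y\<in>carrier ?G. y \<otimes>\<^bsub>?G\<^esub> x = \<one>\<^bsub>?G\<^esub>" by blast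
  qed
qed

lemma quotient_hom:
  assumes "R1 \<subseteq> R2"
  shows "\<exists>h \<in> hom (pres_group k R1) (pres_group k R2).
           h ` carrier (pres_group k R1) = carrier (pres_group k R2)"
proof -
  let ?E1 = "pres_rel k R1" and ?E2 = "pres_rel k R2"
  define h where "h X = ?E2 `` X" for X :: "letter list set"
  have key: "h (?E1 `` {a}) = ?E2 `` {a}" if "a \<in> lists (alph k)" for a
  proof -
    have "(a, a) \<in> ?E1" using that unfolding pres_rel_def by auto
    moreover have "?E2 `` (?E1 `` {a}) \<subseteq> ?E2 `` {a}"
      using rel_mono[OF assms, of k] equiv_rel[of k R2] unfolding equiv_def trans_def by blast
    ultimately show ?thesis unfolding h_def by blast
  qed
  have "h \<in> hom (pres_group k R1) (pres_group k R2)"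
  proof (rule homI)
    fix x assume "x \<in> carrier (pres_group k R1)"
    then obtain a where "a \<in> lists (alph k)" "x = ?E1 `` {a}"
      by (auto simp: pres_group_def elim!: quotientE)
    then show "h x \<in> carrier (pres_group k R2)" using key by (auto simp: pres_group_def intro: quotientI)
  next
    fix x y assume "x \<in> carrier (pres_group k R1)" "y \<in> carrier (pres_group k R1)"
    then obtain a b where "a \<in> lists (alph k)" "x = ?E1 `` {a}" "b \<in> lists (alph k)" "y = ?E1 `` {b}"
      by (auto simp: pres_group_def elim!: quotientE)
    then show "h (x \<otimes>\<^bsub>pres_group k R1\<^esub> y) = h x \<otimes>\<^bsub>pres_group k R2\<^esub> h y"
      using key mult_class' by simp
  qed
  moreover have "h ` carrier (pres_group k R1) = carrier (pres_group k R2)"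
  proof
    show "h ` carrier (pres_group k R1) \<subseteq> carrier (pres_group k R2)"
    proof
      fix y assume "y \<in> h ` carrier (pres_group k R1)"
      then obtain a where "a \<in> lists (alph k)" "y = h (?E1 `` {a})"
        by (auto simp: pres_group_def elim!: quotientE)
      then show "y \<in> carrier (pres_group k R2)" using key[of a]
        by (simp add: pres_group_def quotientI)
    qed
    show "carrier (pres_group k R2) \<subseteq> h ` carrier (pres_group k R1)"
    proof
      fix y assume "y \<in> carrier (pres_group k R2)"
      then obtain a where "a \<in> lists (alph k)" "y = ?E2 `` {a}"
        by (auto simp: pres_group_def elim!: quotientE)
      then show "y \<in> h ` carrier (pres_group k R1)"
        using key by (auto simp: pres_group_def intro!: image_eqI quotientI)
    qed
  qed
  ultimately show ?thesis by blast
qed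


lemma binom_total:
  assumes "finite S"
  shows "(\<Sum>R\<in>Pow S. (p::real) ^ card R * (1 - p) ^ (card S - card R)) = 1"
proof -
  have "(\<Prod>x\<in>S. p + (1 - p)) = (\<Sum>X\<in>Pow S. (\<Prod>x\<in>X. p) * (\<Prod>x\<in>S-X. 1 - p))"
    by (rule prod_add[OF assms])
  also have "\<dots> = (\<Sum>R\<in>Pow S. p ^ card R * (1 - p) ^ (card S - card R))"
    by (rule sum.cong) (auto simp: card_Diff_subset finite_subset[OF _ assms])
  finally show ?thesis by simp
qed

lemma binom_prob_alt:
  assumes "finite S"
  shows "binom_prob S p Q = (\<Sum>R\<in>Pow S. if Q R then p ^ card R * (1 - p) ^ (card S - card R) else 0)"
proof -
  have "{R. R \<subseteq> S \<and> Q R} = {R \<in> Pow S. Q R}" by auto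
  then show ?thesis unfolding binom_prob_def using assms by (simp add: sum.inter_filter[symmetric])
qed

lemma binom_mono:
  assumes "finite S" "0 \<le> p" "p \<le> 1" "\<And>R. R \<subseteq> S \<Longrightarrow> Q1 R \<Longrightarrow> Q2 R"
  shows "binom_prob S p Q1 \<le> binom_prob S p Q2"
  unfolding binom_prob_alt[OF assms(1)]
  by (rule sum_mono) (use assms in auto)

lemma binom_le1:
  assumes "finite S" "0 \<le> p" "p \<le> 1"
  shows "binom_prob S p Q \<le> 1"
proof -
  have "binom_prob S p Q \<le> binom_prob S p (\<lambda>_. True)" by (rule binom_mono) (use assms in auto)
  also have "\<dots> = 1" using binom_prob_alt[OF assms(1)] binom_total[OF assms(1)] by simp
  finally show ?thesis .
qed

lemma binom_marg:
  assumes "finite S" "S' \<subseteq> S"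
  shows "binom_prob S p (\<lambda>R. Q (R \<inter> S')) = binom_prob S' p Q"
proof -
  define D where "D = S - S'"
  have fS': "finite S'" and fD: "finite D" using assms finite_subset unfolding D_def by auto
  have cS: "card S = card S' + card D"
    using assms card_Diff_subset[OF fS' assms(2)] card_mono[OF assms(1,2)] unfolding D_def by simp
  define g where "g R = (if Q (R \<inter> S') then p ^ card R * (1 - p) ^ (card S - card R) else 0)" for R
  define w1 where "w1 A = (if Q A then p ^ card A * (1 - p) ^ (card S' - card A) else 0)" for A
  define w2 where "w2 (B :: 'a set) = p ^ card B * (1 - p) ^ (card D - card B)" for B
  have bij: "bij_betw (\<lambda>(A, B). A \<union> B) (Pow S' \<times> Pow D) (Pow S)"
    by (rule bij_betw_byWitness[where f' = "\<lambda>R. (R \<inter> S', R - S')"])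
       (use assms in \<open>auto simp: D_def\<close>)
  have split: "g (A \<union> B) = w1 A * w2 B" if "A \<subseteq> S'" "B \<subseteq> D" for A B
  proof -
    have dj: "A \<inter> B = {}" and AS: "(A \<union> B) \<inter> S' = A" using that by (auto simp: D_def)
    have fA: "finite A" and fB: "finite B" using that fS' fD finite_subset by auto
    have cA: "card A \<le> card S'" and cB: "card B \<le> card D" using that fS' fD card_mono by auto
    have "card (A \<union> B) = card A + card B" using card_Un_disjoint[OF fA fB dj] .
    moreover have "card S - (card A + card B) = (card S' - card A) + (card D - card B)"
      using cS cA cB by simp
    ultimately show ?thesis unfolding g_def w1_def w2_def AS
      by (simp add: power_add mult_ac)
  qed
  have "binom_prob S p (\<lambda>R. Q (R \<inter> S')) = (\<Sum>R\<in>Pow S. g R)"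
    unfolding binom_prob_alt[OF assms(1)] g_def ..
  also have "\<dots> = (\<Sum>(A, B)\<in>Pow S' \<times> Pow D. g (A \<union> B))"
    using sum.reindex_bij_betw[OF bij, of g] by (simp add: case_prod_unfold)
  also have "\<dots> = (\<Sum>A\<in>Pow S'. \<Sum>B\<in>Pow D. g (A \<union> B))"
    by (rule sum.cartesian_product[symmetric])
  also have "\<dots> = (\<Sum>A\<in>Pow S'. w1 A * (\<Sum>B\<in>Pow D. w2 B))"
    by (auto intro!: sum.cong simp: split sum_distrib_left)
  also have "\<dots> = (\<Sum>A\<in>Pow S'. w1 A)"
    using binom_total[OF fD] unfolding w2_def by simp
  also have "\<dots> = binom_prob S' p Q"
    unfolding binom_prob_alt[OF fS'] w1_def ..
  finally show ?thesis .
qed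


lemma reduced_Cons: "reduced (x # w) \<longleftrightarrow> reduced w \<and> (w \<noteq> [] \<longrightarrow> hd w \<noteq> inv_letter x)"
proof
  assume a: "reduced (x # w)"
  have "reduced w" unfolding reduced_def
  proof (intro allI impI)
    fix i assume "Suc i < length w"
    then show "w ! Suc i \<noteq> inv_letter (w ! i)" using a[unfolded reduced_def, rule_format, of "Suc i"] by simp
  qed
  moreover have "w \<noteq> [] \<longrightarrow> hd w \<noteq> inv_letter x"
    using a[unfolded reduced_def, rule_format, of 0] by (cases w) auto
  ultimately show "reduced w \<and> (w \<noteq> [] \<longrightarrow> hd w \<noteq> inv_letter x)" by blast
next
  assume a: "reduced w \<and> (w \<noteq> [] \<longrightarrow> hd w \<noteq> inv_letter x)"
  show "reduced (x # w)" unfolding reduced_def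
  proof (intro allI impI)
    fix i assume i: "Suc i < length (x # w)"
    show "(x # w) ! Suc i \<noteq> inv_letter ((x # w) ! i)"
    proof (cases i)
      case 0 then show ?thesis using a i by (cases w) auto
    next
      case (Suc j) then show ?thesis using a i unfolding reduced_def by auto
    qed
  qed
qed

lemma reduced_append:
  "reduced (a @ b) \<longleftrightarrow> reduced a \<and> reduced b \<and> (a \<noteq> [] \<and> b \<noteq> [] \<longrightarrow> hd b \<noteq> inv_letter (last a))"
proof (induction a)
  case Nil then show ?case by (simp add: reduced_def)
next
  case (Cons y a)
  have r0: "reduced []" by (simp add: reduced_def)
  show ?case
  proof (cases "a = []")
    case True then show ?thesis by (simp add: reduced_Cons r0)
  next
    case False then show ?thesis using Cons.IH by (auto simp: reduced_Cons)
  qed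
qed

lemma finite_alph: "finite (alph k)"
proof -
  have "alph k = (UNIV :: bool set) \<times> {..<k}" by (auto simp: alph_def)
  then show ?thesis by simp
qed

lemma finite_CR: "finite (CR_words k l)"
proof -
  have "CR_words k l \<subseteq> {w. set w \<subseteq> alph k \<and> length w = l}" by (auto simp: CR_words_def)
  then show ?thesis using finite_lists_length_eq[OF finite_alph] finite_subset by blast
qed

lemma W'_sub_CR:
  assumes "3 dvd l"
  shows "W'_long k l \<subseteq> CR_words k l"
proof
  fix w assume "w \<in> W'_long k l"
  then obtain u v x where w: "w = u @ v @ x" and u: "u \<in> W'_short k (l div 3)"
    and v: "v \<in> W'_short k (l div 3)" and x: "x \<in> W'_short k (l div 3)"
    unfolding W'_long_def by blast
  have len: "length w = l" using u v x assms unfolding w W'_short_def by auto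
  show "w \<in> CR_words k l"
  proof (cases "l div 3 = 0")
    case True
    then have "u = []" "v = []" "x = []" using u v x by (auto simp: W'_short_def)
    then show ?thesis using w len by (simp add: CR_words_def cyc_reduced_def reduced_def)
  next
    case False
    then have ne: "u \<noteq> []" "v \<noteq> []" "x \<noteq> []" using u v x by (auto simp: W'_short_def)
    have "reduced (v @ x)" using v x ne unfolding reduced_append W'_short_def
      by (auto simp: inv_letter_def)
    then have r: "reduced w" using u v ne unfolding w reduced_append W'_short_def
      by (auto simp: inv_letter_def)
    have "last w \<noteq> inv_letter (hd w)" using u x ne unfolding w W'_short_def
      by (auto simp: inv_letter_def)
    then show ?thesis using r len u v x unfolding w CR_words_def cyc_reduced_def W'_short_def by auto
  qed
qed

lemma ineq:
  assumes "preserved_under_quotients P" "0 \<le> p" "p \<le> 1" "3 dvd l"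
  shows "binom_prob (W'_long k l) p (\<lambda>R. P (pres_group k R))
         \<le> binom_prob (CR_words k l) p (\<lambda>R. P (pres_group k R))"
proof -
  let ?S = "CR_words k l" and ?S' = "W'_long k l"
  have "binom_prob ?S' p (\<lambda>R. P (pres_group k R))
        = binom_prob ?S p (\<lambda>R. P (pres_group k (R \<inter> ?S')))"
    using binom_marg[OF finite_CR W'_sub_CR[OF assms(4)], of k p "\<lambda>R. P (pres_group k R)"] by simp
  also have "\<dots> \<le> binom_prob ?S p (\<lambda>R. P (pres_group k R))"
  proof (rule binom_mono[OF finite_CR assms(2,3)])
    fix R assume "P (pres_group k (R \<inter> ?S'))"
    then show "P (pres_group k R)"
      using assms(1) pres_group_group quotient_hom[of "R \<inter> ?S'" R k]
      unfolding preserved_under_quotients_def by blast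
  qed
  finally show ?thesis .
qed

theorem proposition4p6:
  fixes P :: "letter list set monoid \<Rightarrow> bool" and k :: nat and \<rho> :: "nat \<Rightarrow> real"
  assumes "preserved_under_quotients P"
    and "k \<ge> 2"
    and "\<And>n. 0 \<le> \<rho> n \<and> \<rho> n \<le> 1"
  shows "(\<forall>l. 3 dvd l \<longrightarrow> prob_B k l \<rho> P \<ge> prob_B' k l \<rho> P)
       \<and> ((\<lambda>n. prob_B' k (3 * n) \<rho> P) \<longlonglongrightarrow> 1 \<longrightarrow> (\<lambda>n. prob_B k (3 * n) \<rho> P) \<longlonglongrightarrow> 1)"
proof -
  have A: "prob_B k l \<rho> P \<ge> prob_B' k l \<rho> P" if "3 dvd l" for l
    unfolding prob_B_def prob_B'_def using ineq[OF assms(1) _ _ that] assms(3) by blast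
  have B: "prob_B k l \<rho> P \<le> 1" for l
    unfolding prob_B_def using binom_le1[OF finite_CR] assms(3) by blast
  show ?thesis
  proof (intro conjI allI impI)
    fix l :: nat assume "3 dvd l" then show "prob_B k l \<rho> P \<ge> prob_B' k l \<rho> P" by (rule A)
  next
    assume lim: "(\<lambda>n. prob_B' k (3 * n) \<rho> P) \<longlonglongrightarrow> 1"
    show "(\<lambda>n. prob_B k (3 * n) \<rho> P) \<longlonglongrightarrow> 1"
      by (rule tendsto_sandwich[OF _ _ lim tendsto_const]) (auto intro!: always_eventually A B)
  qed
qed

end
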